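(* Let $\mathbf z=(z_i)_{i=1}^N$ be a crystal. Then for every $\mathbf h=(h_i)_{i=1}^N\in(\mathbb R^d)^N$, $$(\mathbf h,\mathrm{Hess}H(\mathbf z)\mathbf h)=\frac{\check c}{a^2}\sum_{\langle i,j\rangle}(h_i-h_j,z_i-z_j)^2\ge0,$$ where the sum is over all pairs $\{i,j\}$ with $|z_i-z_j|=a$.
   Context: Let $d\ge1$ and $U\in C^3_0(\mathbb R)$ even, with a unique $a>0$ such that $U(a)=\min_{r\ge0}U(r)$, and $\check c:=U''(a)>0$; $U(x)=U(|x|)$ for $x\in\mathbb R^d$; $b=\inf\{r>0:U(s)=0\text{ for all }s>r\}$. $H(\mathbf x)=\sum_{1\le i<j\le N}U(x_i-x_j)$ for $\mathbf x\in(\mathbb R^d)^N$. A crystal is $\mathbf z\in(\mathbb R^d)^N$ such that for every $i\ne j$, $|z_i-z_j|=a$ or $|z_i-z_j|>b$. $\mathrm{Hess}H(\mathbf x)=(\partial^2H/\partial x_i^\alpha\partial x_j^\beta)$ and $(\mathbf h,\mathrm{Hess}H(\mathbf x)\mathbf h)=\sum_{i,j}\sum_{\alpha,\beta}\frac{\partial^2H}{\partial x_i^\alpha\partial x_j^\beta}(\mathbf x)h_i^\alpha h_j^\beta$. *)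

theory Defs
  imports "HOL-Analysis.Analysis"
begin

definition C3 :: "(real \<Rightarrow> real) \<Rightarrow> bool" where
  "C3 U \<longleftrightarrow> (\<forall>k<3. \<forall>x. ((deriv ^^ k) U) differentiable (at x))
              \<and> continuous_on UNIV ((deriv ^^ 3) U)"

definition C3_0 :: "(real \<Rightarrow> real) \<Rightarrow> bool" where
  "C3_0 U \<longleftrightarrow> C3 U \<and> bounded {x. U x \<noteq> 0}"

definition cutoff :: "(real \<Rightarrow> real) \<Rightarrow> real" where
  "cutoff U = Inf {r. r > 0 \<and> (\<forall>s>r. U s = 0)}"

definition energy :: "(real \<Rightarrow> real) \<Rightarrow> nat \<Rightarrow> (nat \<Rightarrow> real^'d) \<Rightarrow> real" where
  "energy U N x = (\<Sum>i<N. \<Sum>j\<in>{i<..<N}. U (norm (x i - x j)))"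

definition pderiv_conf ::
  "nat \<Rightarrow> 'd \<Rightarrow> ((nat \<Rightarrow> real^'d) \<Rightarrow> real) \<Rightarrow> (nat \<Rightarrow> real^'d) \<Rightarrow> real" where
  "pderiv_conf i \<alpha> F x = deriv (\<lambda>t. F (x(i := x i + t *\<^sub>R axis \<alpha> 1))) 0"

definition hess_form ::
  "nat \<Rightarrow> ((nat \<Rightarrow> real^'d::finite) \<Rightarrow> real) \<Rightarrow> (nat \<Rightarrow> real^'d) \<Rightarrow> (nat \<Rightarrow> real^'d) \<Rightarrow> real" where
  "hess_form N F x h = (\<Sum>i<N. \<Sum>j<N. \<Sum>\<alpha>\<in>UNIV. \<Sum>\<beta>\<in>UNIV.
      pderiv_conf i \<alpha> (pderiv_conf j \<beta> F) x * (h i $ \<alpha>) * (h j $ \<beta>))"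

definition crystal :: "real \<Rightarrow> real \<Rightarrow> nat \<Rightarrow> (nat \<Rightarrow> real^'d) \<Rightarrow> bool" where
  "crystal a b N z \<longleftrightarrow> (\<forall>i<N. \<forall>j<N. i \<noteq> j \<longrightarrow> norm (z i - z j) = a \<or> norm (z i - z j) > b)"

end

theory Submission
  imports Defs
begin

lemma norm_line:
  fixes v e :: "'a::real_inner"
  assumes "v \<noteq> 0"
  shows "((\<lambda>t. norm (v + t *\<^sub>R e)) has_real_derivative ((v \<bullet> e) / norm v)) (at 0)"
proof -
  have d1: "((\<lambda>t::real. v + t *\<^sub>R e) has_derivative (\<lambda>t. t *\<^sub>R e)) (at 0)"
    by (auto intro!: derivative_eq_intros)
  have d2: "(norm has_derivative (\<lambda>h. h \<bullet> sgn v)) (at (v + 0 *\<^sub>R e))"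
    using has_derivative_norm[OF assms] by simp
  have "((\<lambda>t. norm (v + t *\<^sub>R e)) has_derivative (\<lambda>t. (t *\<^sub>R e) \<bullet> sgn v)) (at 0)"
    using has_derivative_compose[OF d1 d2] by (simp add: o_def)
  then show ?thesis unfolding has_field_derivative_def
    by (rule has_derivative_eq_rhs) (auto simp: sgn_div_norm fun_eq_iff inner_commute field_simps)
qed

lemma line_f:
  fixes v e :: "'a::real_inner"
  assumes "DERIV f (norm v) :> f'" "v \<noteq> 0"
  shows "((\<lambda>t. f (norm (v + t *\<^sub>R e))) has_real_derivative f' * ((v \<bullet> e) / norm v)) (at 0)"
proof -
  have "DERIV f (norm (v + 0 *\<^sub>R e)) :> f'" using assms(1) by simp
  from DERIV_chain2[OF this norm_line[OF assms(2)]] show ?thesis .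
qed

definition dg :: "(real \<Rightarrow> real) \<Rightarrow> 'a::real_inner \<Rightarrow> 'a \<Rightarrow> real" where
  "dg U y u = deriv U (norm y) * ((y \<bullet> u) / norm y)"

definition cf :: "nat \<Rightarrow> nat \<Rightarrow> nat \<Rightarrow> real" where
  "cf j p q = (if j = p then 1 else 0) - (if j = q then 1 else 0)"

lemma dg_line:
  fixes v w u :: "'a::real_inner"
  assumes "DERIV (deriv U) (norm v) :> D" "deriv U (norm v) = 0" "v \<noteq> 0"
  shows "((\<lambda>t. dg U (v + t *\<^sub>R w) u) has_real_derivative
            D * ((v \<bullet> w) / norm v) * ((v \<bullet> u) / norm v)) (at 0)"
proof -
  have n: "((\<lambda>t. (v + t *\<^sub>R w) \<bullet> u) has_real_derivative (w \<bullet> u)) (at 0)"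
    by (auto intro!: derivative_eq_intros simp: inner_add_left)
  have q: "((\<lambda>t. ((v + t *\<^sub>R w) \<bullet> u) / norm (v + t *\<^sub>R w)) has_real_derivative
     ((w \<bullet> u) * norm (v + 0 *\<^sub>R w) - ((v \<bullet> w) / norm v) * ((v + 0 *\<^sub>R w) \<bullet> u))
        / (norm (v + 0 *\<^sub>R w) ^ Suc (Suc 0))) (at 0)"
    by (rule DERIV_quotient[OF n norm_line[OF assms(3)]]) (use assms(3) in simp)
  have f1: "((\<lambda>t. deriv U (norm (v + t *\<^sub>R w))) has_real_derivative D * ((v \<bullet> w) / norm v)) (at 0)"
    by (rule line_f[OF assms(1) assms(3)])
  from DERIV_mult[OF f1 q] show ?thesis
    unfolding dg_def by (rule DERIV_cong) (use assms(2) in simp)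
qed

lemma pc_unfold: "pderiv_conf i \<alpha> G x = deriv (\<lambda>t. G (x(i := x i + t *\<^sub>R axis \<alpha> 1))) 0"
  by (simp add: pderiv_conf_def)

lemma upd_diff:
  fixes x :: "nat \<Rightarrow> real^'d"
  assumes "p \<noteq> q"
  shows "(x(j := x j + t *\<^sub>R e)) p - (x(j := x j + t *\<^sub>R e)) q = (x p - x q) + t *\<^sub>R (cf j p q *\<^sub>R e)"
  using assms by (auto simp: cf_def algebra_simps)

lemma pd1:
  fixes x :: "nat \<Rightarrow> real^'d::finite"
  assumes dU: "\<forall>s. DERIV U s :> deriv U s"
    and dist: "\<forall>p<N. \<forall>q\<in>{p<..<N}. x p \<noteq> x q"
  shows "pderiv_conf j \<beta> (energy U N) x
     = (\<Sum>p<N. \<Sum>q\<in>{p<..<N}. dg U (x p - x q) (cf j p q *\<^sub>R axis \<beta> 1))"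
proof -
  have eq: "(\<lambda>t. energy U N (x(j := x j + t *\<^sub>R axis \<beta> 1))) =
     (\<lambda>t. \<Sum>p<N. \<Sum>q\<in>{p<..<N}. U (norm ((x p - x q) + t *\<^sub>R (cf j p q *\<^sub>R axis \<beta> 1))))"
    unfolding energy_def
    apply (intro ext sum.cong refl)
    subgoal for t p q by (subst upd_diff) auto
    done
  have "((\<lambda>t. \<Sum>p<N. \<Sum>q\<in>{p<..<N}. U (norm ((x p - x q) + t *\<^sub>R (cf j p q *\<^sub>R axis \<beta> 1))))
     has_real_derivative (\<Sum>p<N. \<Sum>q\<in>{p<..<N}. dg U (x p - x q) (cf j p q *\<^sub>R axis \<beta> 1))) (at 0)"
  proof (intro DERIV_sum)
    fix p q assume "p \<in> {..<N}" "q \<in> {p<..<N}"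
    then have "x p - x q \<noteq> 0" using dist by auto
    then show "((\<lambda>t. U (norm ((x p - x q) + t *\<^sub>R (cf j p q *\<^sub>R axis \<beta> 1))))
     has_real_derivative dg U (x p - x q) (cf j p q *\<^sub>R axis \<beta> 1)) (at 0)"
      unfolding dg_def by (rule line_f[OF dU[rule_format]])
  qed
  then show ?thesis unfolding pderiv_conf_def eq by (rule DERIV_imp_deriv)
qed

lemma cf_abs: "\<bar>cf i p q\<bar> \<le> 1" if "p \<noteq> q"
  using that by (auto simp: cf_def)

lemma pd2:
  fixes z :: "nat \<Rightarrow> real^'d::finite"
  assumes dU: "\<forall>s. DERIV U s :> deriv U s"
    and ddU: "\<forall>s. DERIV (deriv U) s :> deriv (deriv U) s"
    and apos: "a > 0"
    and far: "\<forall>p<N. \<forall>q\<in>{p<..<N}. norm (z p - z q) \<ge> a"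
    and crit: "\<forall>p<N. \<forall>q\<in>{p<..<N}. deriv U (norm (z p - z q)) = 0"
  shows "pderiv_conf i \<alpha> (pderiv_conf j \<beta> (energy U N)) z =
    (\<Sum>p<N. \<Sum>q\<in>{p<..<N}. deriv (deriv U) (norm (z p - z q))
        * (((z p - z q) \<bullet> (cf i p q *\<^sub>R axis \<alpha> 1)) / norm (z p - z q))
        * (((z p - z q) \<bullet> (cf j p q *\<^sub>R axis \<beta> 1)) / norm (z p - z q)))"
proof -
  let ?x = "\<lambda>t. z(i := z i + t *\<^sub>R axis \<alpha> 1)"
  let ?G = "\<lambda>t. \<Sum>p<N. \<Sum>q\<in>{p<..<N}. dg U ((z p - z q) + t *\<^sub>R (cf i p q *\<^sub>R axis \<alpha> 1)) (cf j p q *\<^sub>R axis \<beta> 1)"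
  have eqG: "pderiv_conf j \<beta> (energy U N) (?x t) = ?G t" if t: "t \<in> ball 0 a" for t
  proof -
    have "\<forall>p<N. \<forall>q\<in>{p<..<N}. ?x t p \<noteq> ?x t q"
    proof (intro allI impI ballI)
      fix p q assume pq: "p < N" "q \<in> {p<..<N}"
      then have pq': "p \<noteq> q" by auto
      have nw: "norm (t *\<^sub>R (cf i p q *\<^sub>R axis \<alpha> (1::real))) \<le> \<bar>t\<bar>"
        using cf_abs[OF pq', of i] by (simp add: abs_mult mult_left_le)
      have e: "?x t p - ?x t q = (z p - z q) + t *\<^sub>R (cf i p q *\<^sub>R axis \<alpha> 1)"
        by (rule upd_diff) (rule pq')
      have "norm (z p - z q) \<le> norm ((z p - z q) + t *\<^sub>R (cf i p q *\<^sub>R axis \<alpha> 1)) + norm (t *\<^sub>R (cf i p q *\<^sub>R axis \<alpha> (1::real)))"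
        using norm_triangle_ineq4[of "(z p - z q) + t *\<^sub>R (cf i p q *\<^sub>R axis \<alpha> 1)" "t *\<^sub>R (cf i p q *\<^sub>R axis \<alpha> (1::real))"] by simp
      moreover have "norm (z p - z q) \<ge> a" using far pq by auto
      moreover have "\<bar>t\<bar> < a" using t by (simp add: dist_norm)
      ultimately have "norm (?x t p - ?x t q) > 0" using nw unfolding e by linarith
      then show "?x t p \<noteq> ?x t q" by auto
    qed
    then show ?thesis
      apply (simp only: pd1[OF dU])
      apply (intro sum.cong refl)
      subgoal for p q by (subst upd_diff) auto
      done
  qed
  have "(?G has_real_derivative (\<Sum>p<N. \<Sum>q\<in>{p<..<N}. deriv (deriv U) (norm (z p - z q))
        * (((z p - z q) \<bullet> (cf i p q *\<^sub>R axis \<alpha> 1)) / norm (z p - z q))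
        * (((z p - z q) \<bullet> (cf j p q *\<^sub>R axis \<beta> 1)) / norm (z p - z q)))) (at 0)"
  proof (intro DERIV_sum)
    fix p q assume pq: "p \<in> {..<N}" "q \<in> {p<..<N}"
    then have "norm (z p - z q) \<ge> a" using far by auto
    then have nz: "z p - z q \<noteq> 0" using apos by auto
    have c: "deriv U (norm (z p - z q)) = 0" using crit pq by auto
    show "((\<lambda>t. dg U ((z p - z q) + t *\<^sub>R (cf i p q *\<^sub>R axis \<alpha> 1)) (cf j p q *\<^sub>R axis \<beta> 1)) has_real_derivative
       deriv (deriv U) (norm (z p - z q))
        * (((z p - z q) \<bullet> (cf i p q *\<^sub>R axis \<alpha> 1)) / norm (z p - z q))
        * (((z p - z q) \<bullet> (cf j p q *\<^sub>R axis \<beta> 1)) / norm (z p - z q))) (at 0)"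
      by (rule dg_line[OF ddU[rule_format] c nz])
  qed
  then have "((\<lambda>t. pderiv_conf j \<beta> (energy U N) (?x t)) has_real_derivative (\<Sum>p<N. \<Sum>q\<in>{p<..<N}. deriv (deriv U) (norm (z p - z q))
        * (((z p - z q) \<bullet> (cf i p q *\<^sub>R axis \<alpha> 1)) / norm (z p - z q))
        * (((z p - z q) \<bullet> (cf j p q *\<^sub>R axis \<beta> 1)) / norm (z p - z q)))) (at 0)"
    by (rule has_field_derivative_transform_within_open[where S="ball 0 a"]) (use apos eqG in auto)
  then show ?thesis by (subst pc_unfold) (rule DERIV_imp_deriv)
qed

lemma swap_pairs:
  "(\<Sum>i\<in>I. \<Sum>p<N. \<Sum>q\<in>{p<..<N}. f i p q) = (\<Sum>p<N. \<Sum>q\<in>{p<..<N}. \<Sum>i\<in>I. f i p q)"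
  by (subst sum.swap) (simp add: sum.swap[of _ I])

lemma cf_sum:
  fixes X :: "nat \<Rightarrow> real"
  assumes "p < N" "q < N" "p \<noteq> q"
  shows "(\<Sum>i<N. cf i p q * X i) = X p - X q"
proof -
  have "(\<Sum>i<N. cf i p q * X i) = (\<Sum>i<N. (if i = p then X i else 0) - (if i = q then X i else 0))"
    by (intro sum.cong refl) (use assms in \<open>auto simp: cf_def\<close>)
  also have "\<dots> = (\<Sum>i<N. (if i = p then X i else 0)) - (\<Sum>i<N. (if i = q then X i else 0))"
    by (rule sum_subtractf)
  also have "\<dots> = X p - X q" using assms by simp
  finally show ?thesis .
qed

lemma alg:
  fixes v :: "real^'d::finite" and h :: "nat \<Rightarrow> real^'d"
  assumes "p < N" "q < N" "p \<noteq> q"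
  shows "(\<Sum>i<N. \<Sum>j<N. \<Sum>\<alpha>\<in>UNIV. \<Sum>\<beta>\<in>UNIV. (K * ((v \<bullet> (cf i p q *\<^sub>R axis \<alpha> 1)) / n)
          * ((v \<bullet> (cf j p q *\<^sub>R axis \<beta> 1)) / n)) * (h i $ \<alpha>) * (h j $ \<beta>))
       = K / n\<^sup>2 * ((h p - h q) \<bullet> v)\<^sup>2"
proof -
  have A: "(\<Sum>i<N. \<Sum>\<alpha>\<in>UNIV. cf i p q * v $ \<alpha> * h i $ \<alpha>) = (h p - h q) \<bullet> v"
  proof -
    have "(\<Sum>i<N. \<Sum>\<alpha>\<in>UNIV. cf i p q * v $ \<alpha> * h i $ \<alpha>) = (\<Sum>i<N. cf i p q * (h i \<bullet> v))"
      by (simp add: inner_vec_def sum_distrib_left mult_ac)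
    also have "\<dots> = h p \<bullet> v - h q \<bullet> v" by (rule cf_sum[OF assms])
    finally show ?thesis by (simp add: inner_diff_left)
  qed
  have "K / n\<^sup>2 * ((h p - h q) \<bullet> v)\<^sup>2 = K / n\<^sup>2 * ((\<Sum>i<N. \<Sum>\<alpha>\<in>UNIV. cf i p q * v $ \<alpha> * h i $ \<alpha>) * (\<Sum>j<N. \<Sum>\<beta>\<in>UNIV. cf j p q * v $ \<beta> * h j $ \<beta>))"
    by (simp only: A power2_eq_square)
  also have "\<dots> = K / n\<^sup>2 * (\<Sum>i<N. \<Sum>j<N. \<Sum>\<alpha>\<in>UNIV. \<Sum>\<beta>\<in>UNIV. ((cf i p q * v $ \<alpha> * h i $ \<alpha>) * (cf j p q * v $ \<beta> * h j $ \<beta>)))"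
    by (simp only: sum_product)
  also have "\<dots> = (\<Sum>i<N. \<Sum>j<N. \<Sum>\<alpha>\<in>UNIV. \<Sum>\<beta>\<in>UNIV. K / n\<^sup>2 * ((cf i p q * v $ \<alpha> * h i $ \<alpha>) * (cf j p q * v $ \<beta> * h j $ \<beta>)))"
    by (simp only: sum_distrib_left)
  also have "\<dots> = (\<Sum>i<N. \<Sum>j<N. \<Sum>\<alpha>\<in>UNIV. \<Sum>\<beta>\<in>UNIV. (K * ((v \<bullet> (cf i p q *\<^sub>R axis \<alpha> 1)) / n)
          * ((v \<bullet> (cf j p q *\<^sub>R axis \<beta> 1)) / n)) * (h i $ \<alpha>) * (h j $ \<beta>))"
    by (intro sum.cong refl) (simp add: inner_axis power2_eq_square)
  finally show ?thesis by simp
qed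

theorem lemma2p1:
  fixes U :: "real \<Rightarrow> real" and a :: real and N :: nat
    and z h :: "nat \<Rightarrow> real^'d::finite"
  assumes U_C3: "C3_0 U"
    and U_even: "\<forall>x. U (- x) = U x"
    and a_pos: "a > 0"
    and a_min: "\<forall>r\<ge>0. U a \<le> U r"
    and a_unique: "\<forall>r\<ge>0. U r = U a \<longrightarrow> r = a"
    and c_pos: "deriv (deriv U) a > 0"
    and z_crystal: "crystal a (cutoff U) N z"
  shows "hess_form N (energy U N) z h
           = deriv (deriv U) a / a\<^sup>2 *
             (\<Sum>i<N. \<Sum>j\<in>{i<..<N}. if norm (z i - z j) = a
                 then ((h i - h j) \<bullet> (z i - z j))\<^sup>2 else 0)
         \<and> hess_form N (energy U N) z h \<ge> 0"
proof -
  have C3: "C3 U" and bnd: "bounded {x. U x \<noteq> 0}" using U_C3 by (auto simp: C3_0_def)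
  have hC: "\<forall>k<3. \<forall>x. ((deriv ^^ k) U) differentiable (at x)" using C3 unfolding C3_def by blast
  have "U differentiable (at s)" for s
  proof -
    have "(0::nat) < 3" by simp
    from hC[rule_format, OF this] have "((deriv ^^ 0) U) differentiable (at s)" .
    then show ?thesis by simp
  qed
  then have dU: "\<forall>s. DERIV U s :> deriv U s" by (simp add: DERIV_deriv_iff_real_differentiable)
  have "deriv U differentiable (at s)" for s
  proof -
    have "(1::nat) < 3" by simp
    from hC[rule_format, OF this] have "((deriv ^^ 1) U) differentiable (at s)" .
    then show ?thesis by simp
  qed
  then have ddU: "\<forall>s. DERIV (deriv U) s :> deriv (deriv U) s" by (simp add: DERIV_deriv_iff_real_differentiable)
  define b where "b = cutoff U"
  define S where "S = {r. r > 0 \<and> (\<forall>s>r. U s = 0)}"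
  obtain M where M: "\<And>x. x \<in> {x. U x \<noteq> 0} \<Longrightarrow> norm x \<le> M" using bnd unfolding bounded_iff by blast
  have r0: "\<bar>M\<bar> + 1 \<in> S" unfolding S_def
  proof (safe)
    fix s assume "s > \<bar>M\<bar> + 1"
    then show "U s = 0" using M[of s] by fastforce
  qed auto
  then have Sne: "S \<noteq> {}" by auto
  have Ua: "U a \<noteq> 0"
  proof
    assume U0: "U a = 0"
    have "\<forall>s>\<bar>M\<bar> + 1. U s = 0" using r0 unfolding S_def by auto
    moreover have "\<bar>M\<bar> + 2 + a > \<bar>M\<bar> + 1" "\<bar>M\<bar> + 3 + a > \<bar>M\<bar> + 1" using a_pos by auto
    ultimately have e1: "U (\<bar>M\<bar> + 2 + a) = U a" using U0 by auto
    have ge: "\<bar>M\<bar> + 2 + a \<ge> 0" using a_pos by simp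
    from a_unique[rule_format, OF ge e1] have "\<bar>M\<bar> + 2 + a = a" .
    then show False by linarith
  qed
  have Sa: "a \<le> r" if "r \<in> S" for r
  proof (rule ccontr)
    assume "\<not> a \<le> r"
    then have "U a = 0" using that unfolding S_def by auto
    then show False using Ua by simp
  qed
  have ba: "a \<le> b" unfolding b_def cutoff_def S_def[symmetric]
    by (rule cInf_greatest[OF Sne Sa])
  have Ub: "U s = 0" if "s > b" for s
  proof -
    have "Inf S < s" using that unfolding b_def cutoff_def S_def by simp
    then obtain r where "r \<in> S" "r < s" using cInf_lessD[OF Sne] by blast
    then show ?thesis unfolding S_def by auto
  qed
  have dUb: "deriv U s = 0" if "s > b" for s
  proof -
    have "DERIV U s :> 0"
      by (rule has_field_derivative_transform_within_open[OF DERIV_const, where S="{b<..}"])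
         (use that Ub in auto)
    then show ?thesis using DERIV_unique dU by blast
  qed
  have ddUb: "deriv (deriv U) s = 0" if "s > b" for s
  proof -
    have "DERIV (deriv U) s :> 0"
      by (rule has_field_derivative_transform_within_open[OF DERIV_const, where S="{b<..}"])
         (use that dUb in auto)
    then show ?thesis using DERIV_unique ddU by blast
  qed
  have dUa: "deriv U a = 0"
    by (rule DERIV_local_min[OF dU[rule_format] a_pos]) (use a_min in auto)
  have pair: "norm (z p - z q) = a \<or> norm (z p - z q) > b" if "p < N" "q \<in> {p<..<N}" for p q
    using z_crystal that unfolding crystal_def b_def by auto
  have far: "\<forall>p<N. \<forall>q\<in>{p<..<N}. norm (z p - z q) \<ge> a"
  proof (intro allI impI ballI)
    fix p q assume "p < N" "q \<in> {p<..<N}"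
    then have "norm (z p - z q) = a \<or> norm (z p - z q) > b" by (rule pair)
    then show "norm (z p - z q) \<ge> a" using ba by linarith
  qed
  have crit: "\<forall>p<N. \<forall>q\<in>{p<..<N}. deriv U (norm (z p - z q)) = 0"
  proof (intro allI impI ballI)
    fix p q assume "p < N" "q \<in> {p<..<N}"
    then have "norm (z p - z q) = a \<or> norm (z p - z q) > b" by (rule pair)
    then show "deriv U (norm (z p - z q)) = 0" using dUa dUb by (elim disjE) simp_all
  qed
  define T where "T p q = deriv (deriv U) (norm (z p - z q)) / (norm (z p - z q))\<^sup>2 * ((h p - h q) \<bullet> (z p - z q))\<^sup>2" for p q
  have "hess_form N (energy U N) z h = (\<Sum>i<N. \<Sum>j<N. \<Sum>\<alpha>\<in>UNIV. \<Sum>\<beta>\<in>UNIV.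
      (\<Sum>p<N. \<Sum>q\<in>{p<..<N}. deriv (deriv U) (norm (z p - z q))
        * (((z p - z q) \<bullet> (cf i p q *\<^sub>R axis \<alpha> 1)) / norm (z p - z q))
        * (((z p - z q) \<bullet> (cf j p q *\<^sub>R axis \<beta> 1)) / norm (z p - z q))) * (h i $ \<alpha>) * (h j $ \<beta>))"
    unfolding hess_form_def by (simp only: pd2[OF dU ddU a_pos far crit])
  also have "\<dots> = (\<Sum>i<N. \<Sum>j<N. \<Sum>\<alpha>\<in>UNIV. \<Sum>\<beta>\<in>UNIV.
      (\<Sum>p<N. \<Sum>q\<in>{p<..<N}. deriv (deriv U) (norm (z p - z q))
        * (((z p - z q) \<bullet> (cf i p q *\<^sub>R axis \<alpha> 1)) / norm (z p - z q))
        * (((z p - z q) \<bullet> (cf j p q *\<^sub>R axis \<beta> 1)) / norm (z p - z q)) * (h i $ \<alpha>) * (h j $ \<beta>)))"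
    by (simp only: sum_distrib_right)
  also have "\<dots> = (\<Sum>p<N. \<Sum>q\<in>{p<..<N}. \<Sum>i<N. \<Sum>j<N. \<Sum>\<alpha>\<in>UNIV. \<Sum>\<beta>\<in>UNIV.
      deriv (deriv U) (norm (z p - z q))
        * (((z p - z q) \<bullet> (cf i p q *\<^sub>R axis \<alpha> 1)) / norm (z p - z q))
        * (((z p - z q) \<bullet> (cf j p q *\<^sub>R axis \<beta> 1)) / norm (z p - z q)) * (h i $ \<alpha>) * (h j $ \<beta>))"
    by (simp only: swap_pairs)
  also have "\<dots> = (\<Sum>p<N. \<Sum>q\<in>{p<..<N}. T p q)"
    unfolding T_def by (intro sum.cong refl alg) auto
  also have "\<dots> = deriv (deriv U) a / a\<^sup>2 *
             (\<Sum>i<N. \<Sum>j\<in>{i<..<N}. if norm (z i - z j) = a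
                 then ((h i - h j) \<bullet> (z i - z j))\<^sup>2 else 0)"
    unfolding sum_distrib_left
  proof (intro sum.cong refl)
    fix p q assume "p \<in> {..<N}" "q \<in> {p<..<N}"
    then have "norm (z p - z q) = a \<or> norm (z p - z q) > b" using pair by auto
    then show "T p q = deriv (deriv U) a / a\<^sup>2 * (if norm (z p - z q) = a
                 then ((h p - h q) \<bullet> (z p - z q))\<^sup>2 else 0)"
      unfolding T_def using ddUb ba by auto
  qed
  finally have eq: "hess_form N (energy U N) z h = deriv (deriv U) a / a\<^sup>2 *
             (\<Sum>i<N. \<Sum>j\<in>{i<..<N}. if norm (z i - z j) = a
                 then ((h i - h j) \<bullet> (z i - z j))\<^sup>2 else 0)" .
  have "0 \<le> deriv (deriv U) a / a\<^sup>2 *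
             (\<Sum>i<N. \<Sum>j\<in>{i<..<N}. if norm (z i - z j) = a
                 then ((h i - h j) \<bullet> (z i - z j))\<^sup>2 else 0)"
    using c_pos by (intro mult_nonneg_nonneg sum_nonneg) auto
  with eq show ?thesis by simp
qed

end
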